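(* Let $\mathcal{X}\subseteq\mathbb{R}^n$ be compact, $\mathcal{X}_0\subseteq\mathcal{X}$, $U\subseteq\mathbb{R}^m$, and $f:\mathcal{X}\times U\to\mathcal{X}$. Let $\mathcal{X}_{VF}\subseteq\mathcal{X}$ be partitioned as $\mathcal{X}_{VF}=\bigcup_{i=1}^{p}\mathcal{X}_{VF_i}$ for some $p\in\mathbb{N}$. Suppose there exist a function $\mathcal{T}:\mathcal{X}\times\mathcal{X}\to\mathbb{R}$ and functions $\mathcal{V}_i:\mathcal{X}\times\mathcal{X}\to\mathbb{R}_{\geq0}$ (bounded from below), $1\le i\le p$, such that: (i) for every $x\in\mathcal{X}$ there exists $u\in U$ with $\mathcal{T}(x,f(x,u))\geq 0$; (ii) for all $x,y\in\mathcal{X}$ and all $u\in U$: if $\mathcal{T}(x,f(x,u))\geq 0$ and $\mathcal{T}(f(x,u),y)\geq 0$, then $\mathcal{T}(x,y)\geq 0$; (iii) for every $x_0\in\mathcal{X}_0$ and every $1\le i\le p$ there exists $\xi_i>0$ such that for all $z,z'\in\mathcal{X}_{VF_i}$: if $\mathcal{T}(x_0,z)\geq0$ and $\mathcal{T}(z,z')\geq 0$, then $\mathcal{V}_i(x_0,z')\leq\mathcal{V}_i(x_0,z)-\xi_i$. Then there exists a state-feedback controller $\kappa:\mathcal{X}\to 2^U\setminus\{\emptyset\}$ such that every state trajectory of the system under $\kappa$ visits $\mathcal{X}_{VF}$ only finitely often.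
   Context: A discrete-time control system $(\mathcal{X},\mathcal{X}_0,U,f)$ has compact state set $\mathcal{X}$, initial set $\mathcal{X}_0$, input set $U$ and transition function $f$. Given a state-feedback controller $\kappa:\mathcal{X}\to 2^U\setminus\{\emptyset\}$, a state trajectory under $\kappa$ is any sequence $\langle x_0,x_1,\ldots\rangle$ with $x_0\in\mathcal{X}_0$ and $x_{k+1}=f(x_k,u_k)$ for some $u_k\in\kappa(x_k)$, for all $k\in\mathbb{N}$. A trajectory visits a set only finitely often if only finitely many $x_k$ lie in that set. *)

theory Defs
  imports "HOL-Analysis.Analysis"
begin

definition is_trajectory ::
  "'x set \<Rightarrow> ('x \<Rightarrow> 'u \<Rightarrow> 'x) \<Rightarrow> ('x \<Rightarrow> 'u set) \<Rightarrow> (nat \<Rightarrow> 'x) \<Rightarrow> bool" where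
  "is_trajectory X0 f kappa xs \<longleftrightarrow>
     xs 0 \<in> X0 \<and> (\<forall>k. \<exists>u \<in> kappa (xs k). xs (Suc k) = f (xs k) u)"

definition visits_finitely_often :: "(nat \<Rightarrow> 'x) \<Rightarrow> 'x set \<Rightarrow> bool" where
  "visits_finitely_often xs S \<longleftrightarrow> finite {k. xs k \<in> S}"

end

theory Submission
  imports Defs
begin

theorem theorem2:
  fixes X X0 :: "(real ^ 'n) set"
    and U :: "(real ^ 'm) set"
    and f :: "real ^ 'n \<Rightarrow> real ^ 'm \<Rightarrow> real ^ 'n"
    and p :: nat
    and XVF :: "nat \<Rightarrow> (real ^ 'n) set"
    and T :: "real ^ 'n \<Rightarrow> real ^ 'n \<Rightarrow> real"
    and V :: "nat \<Rightarrow> real ^ 'n \<Rightarrow> real ^ 'n \<Rightarrow> real"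
  assumes compact_X: "compact X"
    and X0_sub: "X0 \<subseteq> X"
    and f_maps: "\<forall>x\<in>X. \<forall>u\<in>U. f x u \<in> X"
    and XVF_sub: "\<forall>i\<in>{1..p}. XVF i \<subseteq> X"
    and XVF_disj: "\<forall>i\<in>{1..p}. \<forall>j\<in>{1..p}. i \<noteq> j \<longrightarrow> XVF i \<inter> XVF j = {}"
    and V_nonneg: "\<forall>i\<in>{1..p}. \<forall>x\<in>X. \<forall>y\<in>X. V i x y \<ge> 0"
    and cond_i: "\<forall>x\<in>X. \<exists>u\<in>U. T x (f x u) \<ge> 0"
    and cond_ii: "\<forall>x\<in>X. \<forall>y\<in>X. \<forall>u\<in>U.
                    T x (f x u) \<ge> 0 \<and> T (f x u) y \<ge> 0 \<longrightarrow> T x y \<ge> 0"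
    and cond_iii: "\<forall>x0\<in>X0. \<forall>i\<in>{1..p}. \<exists>\<xi>>0. \<forall>z\<in>XVF i. \<forall>z'\<in>XVF i.
                    T x0 z \<ge> 0 \<and> T z z' \<ge> 0 \<longrightarrow> V i x0 z' \<le> V i x0 z - \<xi>"
  shows "\<exists>\<kappa> :: real ^ 'n \<Rightarrow> (real ^ 'm) set.
           (\<forall>x\<in>X. \<kappa> x \<subseteq> U \<and> \<kappa> x \<noteq> {}) \<and>
           (\<forall>xs. is_trajectory X0 f \<kappa> xs \<longrightarrow>
                 visits_finitely_often xs (\<Union>i\<in>{1..p}. XVF i))"
proof -
  define \<kappa> where "\<kappa> = (\<lambda>x. {u\<in>U. T x (f x u) \<ge> 0})"
  have k1: "\<forall>x\<in>X. \<kappa> x \<subseteq> U \<and> \<kappa> x \<noteq> {}"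
    using cond_i unfolding \<kappa>_def by auto
  have k2: "visits_finitely_often xs (\<Union>i\<in>{1..p}. XVF i)" if tr: "is_trajectory X0 f \<kappa> xs" for xs
  proof -
    have x0: "xs 0 \<in> X0" and stp: "\<And>k. \<exists>u\<in>\<kappa> (xs k). xs (Suc k) = f (xs k) u"
      using tr unfolding is_trajectory_def by auto
    have inX: "xs k \<in> X" for k
    proof (induction k)
      case 0 then show ?case using x0 X0_sub by auto
    next
      case (Suc k) then show ?case using stp[of k] f_maps unfolding \<kappa>_def by auto
    qed
    have gap: "T (xs k) (xs (k + Suc d)) \<ge> 0" for d k
    proof (induction d arbitrary: k)
      case 0 then show ?case using stp[of k] unfolding \<kappa>_def by auto
    next
      case (Suc d)
      obtain u where u: "u \<in> U" "T (xs k) (f (xs k) u) \<ge> 0" "xs (Suc k) = f (xs k) u"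
        using stp[of k] unfolding \<kappa>_def by auto
      have "T (xs (Suc k)) (xs (Suc k + Suc d)) \<ge> 0" using Suc.IH by blast
      then have "T (f (xs k) u) (xs (k + Suc (Suc d))) \<ge> 0" using u by simp
      then show ?case using cond_ii inX u by blast
    qed
    have Tlt: "T (xs a) (xs b) \<ge> 0" if "a < b" for a b
      using gap[of a "b - a - 1"] that by simp
    show ?thesis
    proof (rule ccontr)
      assume "\<not> ?thesis"
      then have "infinite (\<Union>i\<in>{1..p}. {k. xs k \<in> XVF i})"
        unfolding visits_finitely_often_def by (simp add: Collect_ex_eq)
      then obtain i where i: "i \<in> {1..p}" and inf0: "infinite {k. xs k \<in> XVF i}" by blast
      define S where "S = {k. xs k \<in> XVF i} - {0}"
      have infS: "infinite S" using inf0 unfolding S_def by simp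
      obtain \<xi> where \<xi>: "\<xi> > 0" and dec: "\<forall>z\<in>XVF i. \<forall>z'\<in>XVF i.
                    T (xs 0) z \<ge> 0 \<and> T z z' \<ge> 0 \<longrightarrow> V i (xs 0) z' \<le> V i (xs 0) z - \<xi>"
        using cond_iii x0 i by blast
      define e where "e = enumerate S"
      have eS: "e n \<in> S" for n using enumerate_in_set[OF infS] unfolding e_def by blast
      have emono: "e n < e (Suc n)" for n using enumerate_mono[OF lessI infS] unfolding e_def by blast
      have bound: "V i (xs 0) (xs (e n)) \<le> V i (xs 0) (xs (e 0)) - real n * \<xi>" for n
      proof (induction n)
        case 0 then show ?case by simp
      next
        case (Suc n)
        have a: "xs (e n) \<in> XVF i" "xs (e (Suc n)) \<in> XVF i" using eS[of n] eS[of "Suc n"] unfolding S_def by auto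
        have "e n > 0" using eS[of n] unfolding S_def by auto
        then have b: "T (xs 0) (xs (e n)) \<ge> 0" using Tlt by blast
        have c: "T (xs (e n)) (xs (e (Suc n))) \<ge> 0" using Tlt emono by blast
        have "V i (xs 0) (xs (e (Suc n))) \<le> V i (xs 0) (xs (e n)) - \<xi>" using dec a b c by blast
        then show ?case using Suc.IH by (simp add: algebra_simps)
      qed
      obtain n where n: "V i (xs 0) (xs (e 0)) < real n * \<xi>"
        using reals_Archimedean3[OF \<xi>] by blast
      have "V i (xs 0) (xs (e n)) \<ge> 0" using V_nonneg i inX by blast
      then show False using bound[of n] n by linarith
    qed
  qed
  show ?thesis using k1 k2 by blast
qed

end
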